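(* There exist constants $\varepsilon_0>0$ and $C>0$ with the following property. Let $r>0$, $\delta>0$, $R:=r/\delta$ and $\varepsilon:=R+\tfrac12-\lfloor R+\tfrac12\rfloor$. If $\varepsilon\in[0,\varepsilon_0]$ and $R$ is sufficiently large, then for every unit-norm tight frame $\mathcal{F}$ of $\mathbb{R}^2$, $$\mathcal{E}_\delta(r,\mathcal{F})\ge C\,\frac{\delta^{3/2}}{\sqrt r}.$$
   Context: A finite family $\mathcal{F}=\{e_j\}_{j=1}^N\subset\mathbb{R}^2$ is a unit-norm tight frame if $\|e_j\|=1$ for all $j$ and $\sum_j e_je_j^T=\frac{N}{2}I_2$. For $\delta>0$, $Q_\delta(t):=\delta\lfloor t/\delta+1/2\rfloor$, and $E_\delta(x,\mathcal{F}):=\bigl\|x-\frac{2}{N}\sum_{j=1}^N Q_\delta(\langle x,e_j\rangle)e_j\bigr\|$ (Euclidean norm). For $r>0$ set $x_\psi:=r[\cos\psi,\sin\psi]^T$ and $$\mathcal{E}_\delta(r,\mathcal{F}):=\Bigl(\int_0^{2\pi}E_\delta(x_\psi,\mathcal{F})^2\,d\psi\Bigr)^{1/2}.$$ *)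

theory Defs
  imports "HOL-Analysis.Analysis"
begin

definition outer :: "real^2 \<Rightarrow> real^2^2" where
  "outer v = (\<chi> i k. v $ i * v $ k)"

definition unit_norm_tight_frame :: "nat \<Rightarrow> (nat \<Rightarrow> real^2) \<Rightarrow> bool" where
  "unit_norm_tight_frame N e \<longleftrightarrow>
     N \<ge> 1 \<and> (\<forall>j\<in>{1..N}. norm (e j) = 1) \<and>
     (\<Sum>j\<in>{1..N}. outer (e j)) = (real N / 2) *\<^sub>R mat 1"

definition Qd :: "real \<Rightarrow> real \<Rightarrow> real" where
  "Qd \<delta> t = \<delta> * real_of_int \<lfloor>t / \<delta> + 1/2\<rfloor>"

definition Err :: "real \<Rightarrow> real^2 \<Rightarrow> nat \<Rightarrow> (nat \<Rightarrow> real^2) \<Rightarrow> real" where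
  "Err \<delta> x N e = norm (x - (2 / real N) *\<^sub>R (\<Sum>j\<in>{1..N}. Qd \<delta> (x \<bullet> e j) *\<^sub>R e j))"

definition xpsi :: "real \<Rightarrow> real \<Rightarrow> real^2" where
  "xpsi r \<psi> = r *\<^sub>R vector [cos \<psi>, sin \<psi>]"

definition MSE :: "real \<Rightarrow> real \<Rightarrow> nat \<Rightarrow> (nat \<Rightarrow> real^2) \<Rightarrow> real" where
  "MSE \<delta> r N e = sqrt (integral {0..2*pi} (\<lambda>\<psi>. (Err \<delta> (xpsi r \<psi>) N e)^2))"

end

theory Submission
  imports Defs
begin

lemma inner2: "(x::real^2) \<bullet> y = x$1 * y$1 + x$2 * y$2"
  by (simp add: inner_vec_def sum_2)

lemma frame_comp:
  assumes "unit_norm_tight_frame N e"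
  shows "(\<Sum>j\<in>{1..N}. e j $ i * e j $ k) = (if i = k then real N / 2 else 0)"
proof -
  have "(\<Sum>j\<in>{1..N}. outer (e j)) $ i $ k = ((real N / 2) *\<^sub>R mat 1 :: real^2^2) $ i $ k"
    using assms unfolding unit_norm_tight_frame_def by simp
  then show ?thesis by (cases "i = k") (simp_all add: outer_def mat_def)
qed

lemma frame_identity:
  assumes "unit_norm_tight_frame N e"
  shows "(\<Sum>j\<in>{1..N}. (x \<bullet> e j) *\<^sub>R e j) = (real N / 2) *\<^sub>R x"
proof (subst vec_eq_iff, rule allI)
  fix i :: 2
  have "(\<Sum>j\<in>{1..N}. (x \<bullet> e j) *\<^sub>R e j) $ i = (\<Sum>j\<in>{1..N}. (x$1 * e j$1 + x$2 * e j$2) * e j $ i)"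
    by (simp add: inner2)
  also have "\<dots> = x$1 * (\<Sum>j\<in>{1..N}. e j$1 * e j $ i) + x$2 * (\<Sum>j\<in>{1..N}. e j$2 * e j $ i)"
    by (simp add: sum.distrib sum_distrib_left algebra_simps)
  also have "\<dots> = ((real N / 2) *\<^sub>R x) $ i"
    using frame_comp[OF assms] exhaust_2[of i] by auto
  finally show "(\<Sum>j\<in>{1..N}. (x \<bullet> e j) *\<^sub>R e j) $ i = ((real N / 2) *\<^sub>R x) $ i" .
qed

lemma Qd_err: assumes "\<delta> > 0" shows "\<bar>t - Qd \<delta> t\<bar> \<le> \<delta>/2"
proof -
  have a: "real_of_int \<lfloor>t/\<delta> + 1/2\<rfloor> \<le> t/\<delta> + 1/2" by (rule of_int_floor_le)
  have b: "t/\<delta> + 1/2 < real_of_int \<lfloor>t/\<delta> + 1/2\<rfloor> + 1" by (rule real_of_int_floor_add_one_gt)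
  have "\<bar>t/\<delta> - real_of_int \<lfloor>t/\<delta> + 1/2\<rfloor>\<bar> \<le> 1/2" using a b by linarith
  then have "\<delta> * \<bar>t/\<delta> - real_of_int \<lfloor>t/\<delta> + 1/2\<rfloor>\<bar> \<le> \<delta> * (1/2)"
    using assms by (intro mult_left_mono) auto
  moreover have "\<delta> * \<bar>t/\<delta> - real_of_int \<lfloor>t/\<delta> + 1/2\<rfloor>\<bar> = \<bar>\<delta> * (t/\<delta> - real_of_int \<lfloor>t/\<delta> + 1/2\<rfloor>)\<bar>"
    using assms by (simp add: abs_mult)
  moreover have "\<delta> * (t/\<delta> - real_of_int \<lfloor>t/\<delta> + 1/2\<rfloor>) = t - Qd \<delta> t"
    using assms by (simp add: Qd_def right_diff_distrib)
  ultimately show ?thesis by simp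
qed

lemma Err_eq:
  assumes fr: "unit_norm_tight_frame N e"
  shows "Err \<delta> x N e = norm ((2 / real N) *\<^sub>R (\<Sum>j\<in>{1..N}. (x \<bullet> e j - Qd \<delta> (x \<bullet> e j)) *\<^sub>R e j))"
proof -
  have N: "N \<ge> 1" using fr by (simp add: unit_norm_tight_frame_def)
  have "x = (2 / real N) *\<^sub>R (\<Sum>j\<in>{1..N}. (x \<bullet> e j) *\<^sub>R e j)"
    by (subst frame_identity[OF fr]) (use N in simp)
  then have "x - (2 / real N) *\<^sub>R (\<Sum>j\<in>{1..N}. Qd \<delta> (x \<bullet> e j) *\<^sub>R e j)
     = (2 / real N) *\<^sub>R (\<Sum>j\<in>{1..N}. (x \<bullet> e j) *\<^sub>R e j) - (2 / real N) *\<^sub>R (\<Sum>j\<in>{1..N}. Qd \<delta> (x \<bullet> e j) *\<^sub>R e j)"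
    by simp
  also have "\<dots> = (2 / real N) *\<^sub>R (\<Sum>j\<in>{1..N}. (x \<bullet> e j - Qd \<delta> (x \<bullet> e j)) *\<^sub>R e j)"
    by (simp add: scaleR_diff_right[symmetric] sum_subtractf[symmetric] scaleR_diff_left)
  finally show ?thesis by (simp add: Err_def)
qed

lemma Err_le:
  assumes fr: "unit_norm_tight_frame N e" and d: "\<delta> > 0"
  shows "Err \<delta> x N e \<le> \<delta>"
proof -
  have N: "N \<ge> 1" and un: "\<And>j. j \<in> {1..N} \<Longrightarrow> norm (e j) = 1"
    using fr by (auto simp: unit_norm_tight_frame_def)
  have "norm (\<Sum>j\<in>{1..N}. (x \<bullet> e j - Qd \<delta> (x \<bullet> e j)) *\<^sub>R e j)
      \<le> (\<Sum>j\<in>{1..N}. norm ((x \<bullet> e j - Qd \<delta> (x \<bullet> e j)) *\<^sub>R e j))" by (rule norm_sum)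
  also have "\<dots> \<le> (\<Sum>j\<in>{1..N}. \<delta>/2)"
  proof (rule sum_mono)
    fix j assume "j \<in> {1..N}"
    then show "norm ((x \<bullet> e j - Qd \<delta> (x \<bullet> e j)) *\<^sub>R e j) \<le> \<delta>/2"
      using Qd_err[OF d, of "x \<bullet> e j"] un[of j] by simp
  qed
  also have "\<dots> = real N * \<delta> / 2" by simp
  finally have h: "norm (\<Sum>j\<in>{1..N}. (x \<bullet> e j - Qd \<delta> (x \<bullet> e j)) *\<^sub>R e j) \<le> real N * \<delta> / 2" .
  have "Err \<delta> x N e = (2 / real N) * norm (\<Sum>j\<in>{1..N}. (x \<bullet> e j - Qd \<delta> (x \<bullet> e j)) *\<^sub>R e j)"
    unfolding Err_eq[OF fr] using N by simp
  also have "\<dots> \<le> (2 / real N) * (real N * \<delta> / 2)" by (rule mult_left_mono[OF h]) simp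
  also have "\<dots> = \<delta>" using N by simp
  finally show ?thesis .
qed

definition ff :: "real \<Rightarrow> real \<Rightarrow> real" where
  "ff R x = sqrt (1 - (x/R)^2)"

lemma chord_alg:
  fixes p1 p2 q1 q2 t :: real
  assumes "p1^2 + p2^2 = 1" "q1^2 + q2^2 = 1" "0 \<le> t" "t \<le> 1"
  shows "((1-t)*p1+t*q1)^2 + ((1-t)*p2+t*q2)^2 \<le> 1"
proof -
  have pq: "p1*q1+p2*q2 \<le> 1"
  proof -
    have "0 \<le> (p1-q1)^2 + (p2-q2)^2" by simp
    also have "\<dots> = (p1^2+p2^2) + (q1^2+q2^2) - 2*(p1*q1+p2*q2)" by (simp add: power2_eq_square algebra_simps)
    finally show ?thesis using assms by simp
  qed
  have "((1-t)*p1+t*q1)^2 + ((1-t)*p2+t*q2)^2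
     = (1-t)^2*(p1^2+p2^2) + t^2*(q1^2+q2^2) + 2*(t*(1-t))*(p1*q1+p2*q2)"
    by (simp add: power2_eq_square algebra_simps)
  also have "\<dots> \<le> (1-t)^2 + t^2 + 2*(t*(1-t))*1"
  proof -
    have "2*(t*(1-t))*(p1*q1+p2*q2) \<le> 2*(t*(1-t))*1"
      by (rule mult_left_mono) (use assms pq in auto)
    then show ?thesis using assms by simp
  qed
  also have "\<dots> = 1" by (simp add: power2_eq_square algebra_simps)
  finally show ?thesis .
qed

lemma ff_sq: "R > 0 \<Longrightarrow> \<bar>x\<bar> \<le> R \<Longrightarrow> (ff R x)^2 = 1 - (x/R)^2"
proof -
  assume "R > 0" "\<bar>x\<bar> \<le> R"
  then have "\<bar>x/R\<bar> \<le> 1" by (simp add: divide_le_eq_1)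
  then have "\<bar>x/R\<bar>^2 \<le> 1^2" by (intro power_mono) auto
  then have "(x/R)^2 \<le> 1" by (simp only: power2_abs power_one)
  then have "0 \<le> 1 - (x/R)^2" by linarith
  then show ?thesis unfolding ff_def by (rule real_sqrt_pow2)
qed

lemma ff_nonneg: "R > 0 \<Longrightarrow> \<bar>x\<bar> \<le> R \<Longrightarrow> ff R x \<ge> 0"
  using ff_sq[of R x] unfolding ff_def by simp

lemma ff_chord:
  assumes R: "R > 0" and "0 \<le> a" "a \<le> x" "x \<le> b" "b \<le> R" "a < b"
  shows "ff R a + (ff R b - ff R a)*(x-a)/(b-a) \<le> ff R x"
proof -
  define t where "t = (x-a)/(b-a)"
  have t0: "0 \<le> t" and t1: "t \<le> 1" using assms by (auto simp: t_def divide_le_eq_1)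
  have "t*(b-a) = x - a" using assms by (simp add: t_def)
  then have xt: "x = (1-t)*a + t*b" by (simp add: algebra_simps)
  have "(ff R b - ff R a)*(x-a)/(b-a) = t*(ff R b - ff R a)" by (simp add: t_def)
  then have lhs: "ff R a + (ff R b - ff R a)*(x-a)/(b-a) = (1-t)*ff R a + t*ff R b"
    by (simp add: algebra_simps)
  have "((1-t)*(a/R)+t*(b/R))^2 + ((1-t)*ff R a+t*ff R b)^2 \<le> 1"
    by (rule chord_alg) (use assms ff_sq t0 t1 in auto)
  moreover have "(1-t)*(a/R)+t*(b/R) = ((1-t)*a+t*b)/R" by (simp add: add_divide_distrib)
  then have "(1-t)*(a/R)+t*(b/R) = x/R" using xt by simp
  ultimately have "((1-t)*ff R a+t*ff R b)^2 \<le> 1 - (x/R)^2" by simp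
  then have "(1-t)*ff R a+t*ff R b \<le> ff R x" unfolding ff_def
    by (rule real_le_rsqrt)
  then show ?thesis using lhs by simp
qed

lemma ff_cont: assumes "R \<noteq> 0" shows "continuous_on S (ff R)"
  unfolding ff_def using assms by (intro continuous_intros) auto

lemma ff_integrable: "R \<noteq> 0 \<Longrightarrow> ff R integrable_on {a..b}"
  by (intro integrable_continuous_interval ff_cont)

lemma trapezoid:
  assumes R: "R > 0" and "0 \<le> a" "a \<le> b" "b \<le> R"
  shows "(b-a)*(ff R a + ff R b)/2 \<le> integral {a..b} (ff R)"
proof (cases "a = b")
  case True then show ?thesis by simp
next
  case False
  then have ab: "a < b" using assms by simp
  define d where "d = b - a"
  have d0: "d > 0" using ab by (simp add: d_def)
  define L where "L x = ff R a * x + (ff R b - ff R a)*((x-a)*(x-a))/(2*d)" for x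
  have "((\<lambda>x. ff R a + (ff R b - ff R a)*(x-a)/d) has_integral (L b - L a)) {a..b}"
  proof (rule fundamental_theorem_of_calculus)
    show "a \<le> b" using ab by simp
    fix x assume "x \<in> {a..b}"
    have dn: "d \<noteq> 0" using d0 by simp
    have "(L has_real_derivative ff R a + (ff R b - ff R a)*(x-a)/d) (at x within {a..b})"
      unfolding L_def using dn by (auto intro!: derivative_eq_intros simp: field_simps)
    then show "(L has_vector_derivative ff R a + (ff R b - ff R a)*(x-a)/d) (at x within {a..b})"
      by (simp add: has_real_derivative_iff_has_vector_derivative)
  qed
  moreover have "L b - L a = (b-a)*(ff R a + ff R b)/2"
    using d0 by (simp add: L_def field_simps d_def)
  ultimately have h: "((\<lambda>x. ff R a + (ff R b - ff R a)*(x-a)/d) has_integral ((b-a)*(ff R a + ff R b)/2)) {a..b}"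
    by simp
  show ?thesis
    by (rule has_integral_le[OF h integrable_integral[OF ff_integrable]])
       (use ff_chord[OF R] assms ab R in \<open>auto simp: d_def\<close>)
qed

lemma aux_inv: fixes s x R :: real
  assumes "s > 0" "s^2 = 1 - (x/R)^2" "R \<noteq> 0"
  shows "inverse s * 2 - inverse s * x * x * 2 / (R * R) = 2 * s"
proof -
  have "inverse s * 2 - inverse s * x * x * 2 / (R * R) = 2 * (1 - (x/R)^2) / s"
    using assms(1,3) by (simp add: field_simps power2_eq_square)
  also have "\<dots> = 2 * s^2 / s" by (simp only: assms(2)[symmetric])
  also have "\<dots> = 2 * s" using assms(1) by (simp add: power2_eq_square)
  finally show ?thesis .
qed
lemma ff_total:
  assumes R: "R > 0"
  shows "integral {0..R} (ff R) = pi * R / 4"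
proof -
  define A where "A x = (x * ff R x + R * arcsin (x/R))/2" for x
  have "(ff R has_integral (A R - A 0)) {0..R}"
  proof (rule fundamental_theorem_of_calculus_interior)
    show "0 \<le> R" using R by simp
    show "continuous_on {0..R} A" unfolding A_def ff_def
      using R by (intro continuous_intros) (auto simp: divide_le_eq_1 le_divide_eq)
    fix x assume x: "x \<in> {0<..<R}"
    then have x1: "\<bar>x/R\<bar> < 1" using R by (simp add: abs_less_iff field_simps)
    have pos: "1 - (x/R)^2 > 0"
      using x1 by (metis abs_less_iff diff_gt_0_iff_gt less_1_mult abs_square_less_1)
    define s where "s = sqrt (1 - (x/R)^2)"
    have s0: "s > 0" using pos by (simp add: s_def)
    have ss: "s^2 = 1 - (x/R)^2" using pos by (simp add: s_def)
    have m1: "-1 < x/R" "x/R < 1" using x1 unfolding abs_less_iff by linarith+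
    have s0: "sqrt (1 - (x/R)^2) > 0" using pos by simp
    have s2: "(sqrt (1 - (x/R)^2))^2 = 1 - (x/R)^2" using pos by simp
    have "(A has_real_derivative (sqrt (1 - (x/R)^2))) (at x)"
      unfolding A_def ff_def using R m1 pos aux_inv[OF s0 s2]
      by (auto intro!: derivative_eq_intros)
    then show "(A has_vector_derivative ff R x) (at x)"
      by (simp add: has_real_derivative_iff_has_vector_derivative ff_def)
  qed
  moreover have "A R - A 0 = pi * R / 4"
    using R by (simp add: A_def ff_def)
  ultimately show ?thesis by (simp add: integral_unique)
qed

lemma ff_upper:
  assumes R: "R > 0" and v: "0 \<le> v" "v \<le> R"
  shows "ff R (R - v) \<le> sqrt (2 * v / R)"
  unfolding ff_def
proof (rule real_sqrt_le_mono)
  have "1 - ((R-v)/R)^2 = (2 * v * R - v^2)/R^2" using R by (simp add: field_simps power2_eq_square)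
  also have "\<dots> \<le> (2 * v * R)/R^2" using R by (intro divide_right_mono) auto
  also have "\<dots> = 2 * v / R" using R by (simp add: power2_eq_square)
  finally show "1 - ((R-v)/R)^2 \<le> 2 * v / R" .
qed

lemma ff_lower:
  assumes R: "R \<ge> 1" and x: "R - 1 \<le> x" "x \<le> R"
  shows "sqrt ((2*R-1)/R^2) * sqrt (R - x) \<le> ff R x"
  unfolding ff_def real_sqrt_mult[symmetric]
proof (rule real_sqrt_le_mono)
  have "(2*R-1)/R^2 * (R - x) = ((2*R-1)*(R-x))/R^2" by simp
  also have "\<dots> \<le> ((R+x)*(R-x))/R^2"
    using R x by (intro divide_right_mono mult_right_mono) auto
  also have "\<dots> = 1 - (x/R)^2" using R by (simp add: field_simps power2_eq_square)
  finally show "(2*R-1)/R^2 * (R - x) \<le> 1 - (x/R)^2" .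
qed

lemma sqrt_deriv: assumes p: "R - x > (0::real)" shows "((\<lambda>x. -(2/3) * ((R - x) * sqrt (R - x))) has_real_derivative sqrt (R - x)) (at x)"
proof -
  have "((\<lambda>x. -(2/3) * ((R - x) * sqrt (R - x))) has_real_derivative
       (-(2/3)) * ((0-1)* sqrt(R-x) + (inverse (sqrt (R - x)) / 2 * (0-1)) * (R-x))) (at x)"
    using p by (auto intro!: derivative_eq_intros)
  moreover have "inverse (sqrt (R - x)) * (R-x) = sqrt (R-x)"
    using p by (metis less_eq_real_def mult.commute real_div_sqrt divide_inverse)
  moreover have "\<And>s w t::real. (-(2/3)) * ((0-1)* s + (w / 2 * (0-1)) * t)
      = (2/3) * s + (1/3) * (w * t)" by (simp add: field_simps)
  ultimately show ?thesis by simp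
qed

lemma sqrt_int:
  shows "((\<lambda>x. sqrt (R - x)) has_integral (2/3)) {R-1..R}"
proof -
  define A where "A x = -(2/3) * ((R - x) * sqrt (R - x))" for x
  have "((\<lambda>x. sqrt (R - x)) has_integral (A R - A (R-1))) {R-1..R}"
  proof (rule fundamental_theorem_of_calculus_interior)
    show "R - 1 \<le> R" by simp
    show "continuous_on {R-1..R} A" unfolding A_def by (intro continuous_intros)
    fix x assume x: "x \<in> {R-1<..<R}"
    then have p: "R - x > 0" by simp
    have ss: "sqrt (R-x) * (sqrt (R-x) * c) = (R - x) * c" for c
      using p by (simp add: mult.assoc[symmetric])
    have "(A has_real_derivative sqrt (R - x)) (at x)"
      unfolding A_def by (rule sqrt_deriv[OF p])
    then show "(A has_vector_derivative sqrt (R - x)) (at x)"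
      by (simp add: has_real_derivative_iff_has_vector_derivative)
  qed
  moreover have "A R - A (R-1) = 2/3" by (simp add: A_def)
  ultimately show ?thesis by simp
qed

lemma ff_le1: "ff R x \<le> 1"
  unfolding ff_def by simp

lemma sum_bound:
  assumes R: "R > 0"
  shows "m \<ge> 1 \<Longrightarrow> real m - 1/2 \<le> R \<Longrightarrow>
    (\<Sum>k=1..m. ff R (real k - 1/2)) \<le> integral {0..real m - 1/2} (ff R) + ff R (real m - 1/2)/2"
proof (induction m)
  case 0 then show ?case by simp
next
  case (Suc m)
  show ?case
  proof (cases "m = 0")
    case True
    have "(1/2 - 0)*(ff R 0 + ff R (1/2))/2 \<le> integral {0..1/2} (ff R)"
      using Suc.prems R by (intro trapezoid) auto
    moreover have "ff R 0 = 1" by (simp add: ff_def)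
    moreover have "ff R (1/2) \<le> 1" by (rule ff_le1)
    ultimately show ?thesis using True by simp
  next
    case False
    then have m1: "m \<ge> 1" by simp
    have le: "real m - 1/2 \<le> R" using Suc.prems by simp
    have IH: "(\<Sum>k=1..m. ff R (real k - 1/2)) \<le> integral {0..real m - 1/2} (ff R) + ff R (real m - 1/2)/2"
      using Suc.IH m1 le by simp
    have tr: "((real m + 1/2) - (real m - 1/2))*(ff R (real m - 1/2) + ff R (real m + 1/2))/2
          \<le> integral {real m - 1/2..real m + 1/2} (ff R)"
      using Suc.prems R m1 by (intro trapezoid) auto
    have Rn: "R \<noteq> 0" using R by simp
    have comb: "integral {0..real m - 1/2} (ff R) + integral {real m - 1/2..real m + 1/2} (ff R)
        = integral {0..real m + 1/2} (ff R)"
      using Henstock_Kurzweil_Integration.integral_combine[where a=0 and c="real m - 1/2" and b="real m + 1/2" and f="ff R"] ff_integrable[OF Rn] m1 by auto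
    have "(\<Sum>k=1..Suc m. ff R (real k - 1/2)) = (\<Sum>k=1..m. ff R (real k - 1/2)) + ff R (real m + 1/2)"
      by (simp add: add_ac)
    also have "\<dots> \<le> integral {0..real (Suc m) - 1/2} (ff R) + ff R (real (Suc m) - 1/2)/2"
      using IH tr comb by (simp add: algebra_simps)
    finally show ?thesis .
  qed
qed

lemma num_bounds:
  assumes R: "R \<ge> 100" and e0: "0 \<le> eps" and e1: "eps \<le> 1/200"
  shows "sqrt (2*(1+eps)/R) \<le> 142/100 / sqrt R"
    and "sqrt (2*eps/R) \<le> 1/10 / sqrt R"
    and "sqrt ((2*R-1)/R^2) \<ge> 141/100 / sqrt R"
proof -
  have q: "sqrt R > 0" using R by simp
  have "sqrt (2*(1+eps)) \<le> sqrt ((142/100)^2)"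
    using e1 by (intro real_sqrt_le_mono) (simp add: power2_eq_square)
  then have h: "sqrt (2*(1+eps)) \<le> 142/100" by simp
  have "sqrt (2*(1+eps)/R) = sqrt (2*(1+eps)) / sqrt R" by (simp add: real_sqrt_divide)
  also have "\<dots> \<le> 142/100 / sqrt R" by (rule divide_right_mono) (use h q in auto)
  finally show "sqrt (2*(1+eps)/R) \<le> 142/100 / sqrt R" .
  have "sqrt (2*eps) \<le> sqrt ((1/10)^2)"
    using e1 by (intro real_sqrt_le_mono) (simp add: power2_eq_square)
  then have h2: "sqrt (2*eps) \<le> 1/10" by simp
  have "sqrt (2*eps/R) = sqrt (2*eps) / sqrt R" by (simp add: real_sqrt_divide)
  also have "\<dots> \<le> 1/10 / sqrt R" by (rule divide_right_mono) (use h2 q in auto)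
  finally show "sqrt (2*eps/R) \<le> 1/10 / sqrt R" .
  have "sqrt ((141/100)^2 * R) \<le> sqrt (2*R-1)"
    using R by (intro real_sqrt_le_mono) (simp add: power2_eq_square)
  then have "141/100 * sqrt R \<le> sqrt (2*R-1)" by (simp add: real_sqrt_mult)
  moreover have "sqrt ((2*R-1)/R^2) = sqrt (2*R-1) / R" using R by (simp add: real_sqrt_divide)
  moreover have "141/100 / sqrt R = 141/100 * sqrt R / R"
  proof -
    have "R = sqrt R * sqrt R" using R by simp
    then show ?thesis using q by (metis divide_divide_eq_left nonzero_mult_div_cancel_right order_less_irrefl times_divide_eq_right)
  qed
  moreover have "141/100 * sqrt R / R \<le> sqrt (2*R-1) / R"
    by (rule divide_right_mono) (use calculation R in auto)
  ultimately show "sqrt ((2*R-1)/R^2) \<ge> 141/100 / sqrt R" by simp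
qed

lemma E_main:
  assumes R: "R \<ge> 100" and n: "real n = R + 1/2 - eps" and e0: "0 \<le> eps" and e1: "eps \<le> 1/200"
  shows "(\<Sum>k=1..n. ff R (real k - 1/2)) \<le> pi*R/4 - 1/(10* sqrt R)"
proof -
  have R0: "R > 0" and Rn: "R \<noteq> 0" using R by auto
  have "n \<ge> 2" using n R e1 by linarith
  then obtain m where nm: "n = Suc m" and m1: "m \<ge> 1" by (cases n) auto
  define a where "a = real m - 1/2"
  have a_eq: "a = R - (1 + eps)" using n nm by (simp add: a_def)
  have S1: "(\<Sum>k=1..n. ff R (real k - 1/2)) = (\<Sum>k=1..m. ff R (real k - 1/2)) + ff R (R - eps)"
    using nm n by simp
  have S2: "(\<Sum>k=1..m. ff R (real k - 1/2)) \<le> integral {0..a} (ff R) + ff R a/2"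
    using sum_bound[OF R0 m1] a_eq e0 by (simp add: a_def)
  have T: "pi*R/4 = integral {0..a} (ff R) + integral {a..R-1} (ff R) + integral {R-1..R} (ff R)"
  proof -
    have "integral {0..a} (ff R) + integral {a..R} (ff R) = integral {0..R} (ff R)"
      using Henstock_Kurzweil_Integration.integral_combine[where a=0 and c=a and b=R and f="ff R"]
        ff_integrable[OF Rn] a_eq e0 e1 R by auto
    moreover have "integral {a..R-1} (ff R) + integral {R-1..R} (ff R) = integral {a..R} (ff R)"
      using Henstock_Kurzweil_Integration.integral_combine[where a=a and c="R-1" and b=R and f="ff R"]
        ff_integrable[OF Rn] a_eq e0 by auto
    ultimately show ?thesis using ff_total[OF R0] by simp
  qed
  have N: "integral {a..R-1} (ff R) \<ge> 0"
    by (rule integral_nonneg[OF ff_integrable[OF Rn]]) (use a_eq e1 R in \<open>auto intro!: ff_nonneg\<close>)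
  define c where "c = sqrt ((2*R-1)/R^2)"
  have L: "integral {R-1..R} (ff R) \<ge> c * (2/3)"
  proof (rule has_integral_le[OF has_integral_mult_right[OF sqrt_int] integrable_integral[OF ff_integrable[OF Rn]]])
    fix x assume "x \<in> {R-1..R}"
    then show "c * sqrt (R - x) \<le> ff R x" unfolding c_def using R by (intro ff_lower) auto
  qed
  have U1: "ff R a \<le> sqrt (2*(1+eps)/R)" unfolding a_eq using R e0 e1 by (intro ff_upper) auto
  have U2: "ff R (R - eps) \<le> sqrt (2*eps/R)" using R e0 e1 by (intro ff_upper) auto
  note B = num_bounds[OF R e0 e1]
  define w where "w = 1 / sqrt R"
  have b1: "sqrt (2*(1+eps)/R) \<le> 142/100 * w" using B(1) by (simp add: w_def)
  have b2: "sqrt (2*eps/R) \<le> 1/10 * w" using B(2) by (simp add: w_def)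
  have b3: "c*(2/3) \<ge> 141/100 * w * (2/3)" using B(3) by (simp add: c_def w_def)
  have w0: "w \<ge> 0" using R by (simp add: w_def)
  have b4: "1/(10 * sqrt R) = 1/10 * w" by (simp add: w_def)
  show ?thesis using S1 S2 T N L U1 U2 b1 b2 b3 b4 w0 by linarith
qed

lemma cnt_sum:
  "(\<Sum>k=1..n. (if int k \<le> m then 1 else 0 :: real)) = of_int (max 0 (min (int n) m))"
proof (induction n)
  case 0 then show ?case by simp
next
  case (Suc n)
  then show ?case by (cases "int (Suc n) \<le> m") auto
qed

lemma round_sum:
  fixes y :: real
  assumes "- int n \<le> \<lfloor>y + 1/2\<rfloor>" "\<lfloor>y + 1/2\<rfloor> \<le> int n"
  shows "real_of_int \<lfloor>y + 1/2\<rfloor> =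
    (\<Sum>k=1..n. (if real k - 1/2 \<le> y then 1 else 0) - (if y < 1/2 - real k then 1 else 0))"
proof -
  define m where "m = \<lfloor>y + 1/2\<rfloor>"
  have e1: "(real k - 1/2 \<le> y) \<longleftrightarrow> int k \<le> m" for k :: nat
  proof -
    have "(real k - 1/2 \<le> y) \<longleftrightarrow> of_int (int k) \<le> y + 1/2" by auto
    also have "\<dots> \<longleftrightarrow> int k \<le> m" unfolding m_def by (rule le_floor_iff[symmetric])
    finally show ?thesis .
  qed
  have e2: "(y < 1/2 - real k) \<longleftrightarrow> int k \<le> - m" for k :: nat
  proof -
    have "(y < 1/2 - real k) \<longleftrightarrow> y + 1/2 < of_int (1 - int k)" by auto
    also have "\<dots> \<longleftrightarrow> m < 1 - int k" unfolding m_def by (rule floor_less_iff[symmetric])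
    also have "\<dots> \<longleftrightarrow> int k \<le> - m" by auto
    finally show ?thesis .
  qed
  have "(\<Sum>k=1..n. (if real k - 1/2 \<le> y then 1 else 0) - (if y < 1/2 - real k then 1 else 0))
     = (\<Sum>k=1..n. (if int k \<le> m then 1 else 0 :: real)) - (\<Sum>k=1..n. (if int k \<le> -m then 1 else 0 :: real))"
    by (simp add: e1 e2 sum_subtractf)
  also have "\<dots> = of_int m" using assms unfolding cnt_sum m_def[symmetric] by auto
  finally show ?thesis by (simp add: m_def)
qed

lemma cos_int: fixes a b :: real assumes "a \<le> b" shows "(cos has_integral (sin b - sin a)) {a..b}"
  by (rule fundamental_theorem_of_calculus[OF assms])
     (auto intro!: derivative_eq_intros simp: has_real_derivative_iff_has_vector_derivative[symmetric])

lemma cos_ge_iff: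
  assumes "0 \<le> b" "b \<le> pi" "0 \<le> x" "x \<le> 2*pi"
  shows "cos b \<le> cos x \<longleftrightarrow> (x \<le> b \<or> 2*pi - b \<le> x)"
proof (cases "x \<le> pi")
  case True
  then show ?thesis using assms cos_mono_le_eq[of b x] by auto
next
  case False
  have "cos x = cos (2*pi - x)" by simp
  then show ?thesis using assms False cos_mono_le_eq[of b "2*pi - x"] by auto
qed

lemma ind_int:
  assumes c: "-1 \<le> c" "c \<le> 1"
  shows "((\<lambda>x. if c \<le> cos x then cos x else 0) has_integral (2 * sqrt (1 - c^2))) {0..2*pi}"
proof -
  define b where "b = arccos c"
  have b0: "0 \<le> b" and bp: "b \<le> pi" using arccos_bounded[OF c] by (auto simp: b_def)
  have cb: "cos b = c" using c by (simp add: b_def)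
  have sb: "sin b = sqrt (1 - c^2)" using c by (simp add: b_def sin_arccos)
  let ?f = "\<lambda>x. if c \<le> cos x then cos x else 0"
  have i1: "(?f has_integral sin b) {0..b}"
    by (rule has_integral_spike_finite[of "{}" _ _ cos])
       (use cos_int[OF b0] cos_ge_iff[OF b0 bp] cb bp in auto)
  have i2: "(?f has_integral 0) {b..2*pi-b}"
    by (rule has_integral_spike_finite[of "{b, 2*pi-b}" _ _ "\<lambda>_. 0"])
       (use cos_ge_iff[OF b0 bp] cb bp b0 in auto)
  have i3: "(?f has_integral sin b) {2*pi-b..2*pi}"
    by (rule has_integral_spike_finite[of "{}" _ _ cos])
       (use cos_int[of "2*pi-b" "2*pi"] b0 cos_ge_iff[OF b0 bp] cb bp in auto)
  have i12: "(?f has_integral (sin b + 0)) {0..2*pi-b}"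
    by (rule has_integral_combine[OF _ _ i1 i2]) (use b0 bp in auto)
  have "(?f has_integral (sin b + 0 + sin b)) {0..2*pi}"
    by (rule has_integral_combine[OF _ _ i12 i3]) (use b0 bp in auto)
  then show ?thesis using sb by simp
qed

lemma cos_int02: "(cos has_integral 0) {0..2*pi}"
  using cos_int[of 0 "2*pi"] by simp

lemma cos2_int: "((\<lambda>x. cos x * cos x) has_integral pi) {0..2*pi}"
proof -
  have "((\<lambda>x. cos x * cos x) has_integral ((2*pi + sin (2*pi) * cos (2*pi))/2 - (0 + sin 0 * cos 0)/2)) {0..2*pi}"
  proof (rule fundamental_theorem_of_calculus)
    fix x :: real assume "x \<in> {0..2*pi}"
    have "((\<lambda>x. (x + sin x * cos x)/2) has_real_derivative cos x * cos x) (at x within {0..2*pi})"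
      by (auto intro!: derivative_eq_intros simp: algebra_simps power2_eq_square[symmetric] sin_squared_eq)
    then show "((\<lambda>x. (x + sin x * cos x)/2) has_vector_derivative cos x * cos x) (at x within {0..2*pi})"
      by (simp add: has_real_derivative_iff_has_vector_derivative)
  qed simp
  then show ?thesis by simp
qed

lemma I_formula:
  assumes R: "R > 0"
  shows "((\<lambda>x. (R * cos x - of_int \<lfloor>R * cos x + 1/2\<rfloor>) * cos x) has_integral
           (pi*R - 4*(\<Sum>k=1..nat \<lfloor>R + 1/2\<rfloor>. ff R (real k - 1/2)))) {0..2*pi}"
proof -
  define n where "n = nat \<lfloor>R + 1/2\<rfloor>"
  have nR: "real n \<le> R + 1/2" using R unfolding n_def by linarith
  have nR2: "R < real n + 1/2" using R unfolding n_def by linarith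
  define c where "c k = (real k - 1/2)/R" for k :: nat
  define s where "s k = sqrt (1 - (c k)^2)" for k :: nat
  have c01: "0 \<le> c k \<and> c k \<le> 1" if "k \<in> {1..n}" for k
    using that nR R by (auto simp: c_def field_simps)
  have pt: "(R * cos x - of_int \<lfloor>R * cos x + 1/2\<rfloor>) * cos x =
     R * (cos x * cos x) - (\<Sum>k=1..n. (if c k \<le> cos x then cos x else 0)
          - (cos x - (if - c k \<le> cos x then cos x else 0)))" for x
  proof -
    have b1: "- int n \<le> \<lfloor>R * cos x + 1/2\<rfloor>"
    proof -
      have "R * cos x \<ge> - R" using mult_left_mono[OF cos_ge_minus_one[of x], of R] R by simp
      then show ?thesis using nR2 by linarith
    qed
    have b2: "\<lfloor>R * cos x + 1/2\<rfloor> \<le> int n"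
    proof -
      have "R * cos x \<le> R" using R cos_le_one[of x] by (simp add: mult_left_le)
      then show ?thesis unfolding n_def by linarith
    qed
    have e1: "(real k - 1/2 \<le> R * cos x) \<longleftrightarrow> c k \<le> cos x" for k
      using R by (simp add: c_def pos_divide_le_eq mult.commute)
    have e2: "(R * cos x < 1/2 - real k) \<longleftrightarrow> \<not> (- c k \<le> cos x)" for k
      using R by (auto simp: c_def field_simps)
    have "of_int \<lfloor>R * cos x + 1/2\<rfloor> * cos x =
       (\<Sum>k=1..n. (if real k - 1/2 \<le> R * cos x then 1 else 0) - (if R * cos x < 1/2 - real k then 1 else 0)) * cos x"
      using round_sum[OF b1 b2] by simp
    also have "\<dots> = (\<Sum>k=1..n. (if c k \<le> cos x then cos x else 0)
          - (cos x - (if - c k \<le> cos x then cos x else 0)))"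
      unfolding sum_distrib_right by (intro sum.cong refl) (auto simp: e1 e2 left_diff_distrib)
    finally show ?thesis by (simp add: algebra_simps)
  qed
  have hs: "((\<lambda>x. \<Sum>k=1..n. (if c k \<le> cos x then cos x else 0)
          - (cos x - (if - c k \<le> cos x then cos x else 0))) has_integral
        (\<Sum>k=1..n. 2 * s k - (0 - 2 * s k))) {0..2*pi}"
  proof (rule has_integral_sum)
    fix k assume k: "k \<in> {1..n}"
    have a: "((\<lambda>x. if c k \<le> cos x then cos x else 0) has_integral 2 * s k) {0..2*pi}"
      using ind_int[of "c k"] c01[OF k] by (simp add: s_def)
    have b: "((\<lambda>x. if - c k \<le> cos x then cos x else 0) has_integral 2 * s k) {0..2*pi}"
      using ind_int[of "- c k"] c01[OF k] by (simp add: s_def)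
    show "((\<lambda>x. (if c k \<le> cos x then cos x else 0)
          - (cos x - (if - c k \<le> cos x then cos x else 0))) has_integral 2 * s k - (0 - 2 * s k)) {0..2*pi}"
      by (intro has_integral_diff a b cos_int02)
  qed simp
  have h: "((\<lambda>x. R * (cos x * cos x) - (\<Sum>k=1..n. (if c k \<le> cos x then cos x else 0)
          - (cos x - (if - c k \<le> cos x then cos x else 0)))) has_integral
        (R * pi - (\<Sum>k=1..n. 2 * s k - (0 - 2 * s k)))) {0..2*pi}"
    by (intro has_integral_diff hs has_integral_mult_right cos2_int)
  have sv: "(\<Sum>k=1..n. 2 * s k - (0 - 2 * s k)) = 4 * (\<Sum>k=1..n. ff R (real k - 1/2))"
    by (simp add: sum_distrib_left s_def c_def ff_def)
  have eqf: "(\<lambda>x. (R * cos x - of_int \<lfloor>R * cos x + 1/2\<rfloor>) * cos x) = (\<lambda>x. R * (cos x * cos x) - (\<Sum>k=1..n. (if c k \<le> cos x then cos x else 0)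
          - (cos x - (if - c k \<le> cos x then cos x else 0))))"
    by (rule ext) (rule pt)
  have pr: "R * pi = pi * R" by simp
  show ?thesis unfolding n_def[symmetric] eqf using h[unfolded sv pr] .
qed

lemma int_bdd:
  fixes f :: "real \<Rightarrow> real"
  assumes m: "f \<in> borel_measurable borel" and b: "\<And>x. \<bar>f x\<bar> \<le> B"
  shows "f integrable_on {a..b}"
proof (rule measurable_bounded_by_integrable_imp_integrable_real[where g="\<lambda>_. B"])
  show "f \<in> borel_measurable (lebesgue_on {a..b})"
    using m by (simp add: measurable_completion measurable_restrict_space1)
qed (use b in auto)

lemma shift_int:
  fixes g :: "real \<Rightarrow> real"
  assumes per: "\<And>x. g (x + 2*pi) = g x" and G: "(g has_integral G) {0..2*pi}"
    and th: "0 \<le> \<theta>" "\<theta> \<le> 2*pi"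
  shows "((\<lambda>\<psi>. g (\<psi> - \<theta>)) has_integral G) {0..2*pi}"
proof -
  have gi: "g integrable_on {0..2*pi}" using G by blast
  define G1 where "G1 = integral {0..2*pi-\<theta>} g"
  define G2 where "G2 = integral {2*pi-\<theta>..2*pi} g"
  have GG: "G1 + G2 = G"
    unfolding G1_def G2_def
    using Henstock_Kurzweil_Integration.integral_combine[where a=0 and c="2*pi-\<theta>" and b="2*pi" and f=g] gi th G
    by (auto simp: integral_unique)
  have i1: "(g has_integral G1) {0..2*pi-\<theta>}" unfolding G1_def
    by (rule integrable_integral, rule integrable_subinterval_real[OF gi]) (use th in auto)
  have i2: "(g has_integral G2) {2*pi-\<theta>..2*pi}" unfolding G2_def
    by (rule integrable_integral, rule integrable_subinterval_real[OF gi]) (use th in auto)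
  have h1: "((\<lambda>x. g (x + - \<theta>)) has_integral G1) {0 - - \<theta>..(2*pi-\<theta>) - - \<theta>}"
    by (rule has_integral_shift_real_ivl[OF i1])
  have h1': "((\<lambda>\<psi>. g (\<psi> - \<theta>)) has_integral G1) {\<theta>..2*pi}" using h1 by simp
  have h2: "((\<lambda>x. g (x + (2*pi - \<theta>))) has_integral G2) {(2*pi-\<theta>) - (2*pi - \<theta>)..2*pi - (2*pi - \<theta>)}"
    by (rule has_integral_shift_real_ivl[OF i2])
  have eq: "g (x + (2*pi - \<theta>)) = g (x - \<theta>)" for x
    using per[of "x - \<theta>"] by (simp add: algebra_simps)
  have h2': "((\<lambda>\<psi>. g (\<psi> - \<theta>)) has_integral G2) {0..\<theta>}" using h2 by (simp add: eq)
  have "((\<lambda>\<psi>. g (\<psi> - \<theta>)) has_integral (G2 + G1)) {0..2*pi}"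
    by (rule has_integral_combine[OF _ _ h2' h1']) (use th in auto)
  then show ?thesis using GG by (simp add: add.commute)
qed

lemma frame_angles:
  assumes fr: "unit_norm_tight_frame N e"
  shows "\<exists>\<theta>. \<forall>j\<in>{1..N}. 0 \<le> \<theta> j \<and> \<theta> j \<le> 2*pi \<and> e j $ 1 = cos (\<theta> j) \<and> e j $ 2 = sin (\<theta> j)"
proof -
  have "\<forall>j\<in>{1..N}. \<exists>t. 0 \<le> t \<and> t \<le> 2*pi \<and> e j $ 1 = cos t \<and> e j $ 2 = sin t"
  proof
    fix j assume j: "j \<in> {1..N}"
    then have "norm (e j) = 1" using fr by (simp add: unit_norm_tight_frame_def)
    then have "e j \<bullet> e j = 1" by (simp add: dot_square_norm)
    then have "(e j $ 1)^2 + (e j $ 2)^2 = 1" by (simp add: inner2 power2_eq_square)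
    then obtain t where "0 \<le> t" "t < 2*pi" "e j $ 1 = cos t" "e j $ 2 = sin t"
      by (rule sincos_total_2pi)
    then show "\<exists>t. 0 \<le> t \<and> t \<le> 2*pi \<and> e j $ 1 = cos t \<and> e j $ 2 = sin t" by auto
  qed
  then show ?thesis by (rule bchoice)
qed

lemma inner_xpsi:
  assumes "v $ 1 = cos t" "v $ 2 = sin t"
  shows "xpsi r \<psi> \<bullet> v = r * cos (\<psi> - t)"
  using assms by (simp add: inner2 xpsi_def cos_diff algebra_simps)

lemma norm_xpsi:
  assumes "r \<ge> 0" shows "norm (xpsi r \<psi>) = r"
proof -
  have "xpsi r \<psi> \<bullet> xpsi r \<psi> = (r * cos \<psi>)^2 + (r * sin \<psi>)^2"
    by (simp add: inner2 xpsi_def power2_eq_square)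
  also have "\<dots> = r^2 * ((cos \<psi>)^2 + (sin \<psi>)^2)" by (simp only: power_mult_distrib distrib_left)
  also have "\<dots> = r^2" by simp
  finally have "xpsi r \<psi> \<bullet> xpsi r \<psi> = r^2" .
  then show ?thesis using assms by (simp add: norm_eq_sqrt_inner)
qed

definition gg :: "real \<Rightarrow> real \<Rightarrow> real \<Rightarrow> real" where
  "gg r \<delta> \<phi> = (r * cos \<phi> - Qd \<delta> (r * cos \<phi>)) * cos \<phi>"

lemma Err_lower:
  assumes fr: "unit_norm_tight_frame N e" and r: "r > 0"
    and th: "\<forall>j\<in>{1..N}. e j $ 1 = cos (\<theta> j) \<and> e j $ 2 = sin (\<theta> j)"
  shows "\<bar>(2 / real N) * (\<Sum>j\<in>{1..N}. gg r \<delta> (\<psi> - \<theta> j))\<bar> \<le> Err \<delta> (xpsi r \<psi>) N e"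
proof -
  define x where "x = xpsi r \<psi>"
  define v where "v = (2 / real N) *\<^sub>R (\<Sum>j\<in>{1..N}. (x \<bullet> e j - Qd \<delta> (x \<bullet> e j)) *\<^sub>R e j)"
  have Ev: "Err \<delta> x N e = norm v" unfolding v_def by (rule Err_eq[OF fr])
  have hx: "x \<bullet> e j = r * cos (\<psi> - \<theta> j)" if "j \<in> {1..N}" for j
    unfolding x_def using th that by (intro inner_xpsi) auto
  have "v \<bullet> x = (2 / real N) * (\<Sum>j\<in>{1..N}. (x \<bullet> e j - Qd \<delta> (x \<bullet> e j)) * (x \<bullet> e j))"
    unfolding v_def by (simp add: inner_sum_left inner_sum_right inner_commute)
  also have "\<dots> = (2 / real N) * (\<Sum>j\<in>{1..N}. r * gg r \<delta> (\<psi> - \<theta> j))"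
  proof -
    have "(x \<bullet> e j - Qd \<delta> (x \<bullet> e j)) * (x \<bullet> e j) = r * gg r \<delta> (\<psi> - \<theta> j)" if "j \<in> {1..N}" for j
      using hx[OF that] by (simp add: gg_def)
    then have "(\<Sum>j\<in>{1..N}. (x \<bullet> e j - Qd \<delta> (x \<bullet> e j)) * (x \<bullet> e j)) = (\<Sum>j\<in>{1..N}. r * gg r \<delta> (\<psi> - \<theta> j))" by (rule sum.cong[OF refl])
    then show ?thesis by simp
  qed
  also have "\<dots> = r * ((2 / real N) * (\<Sum>j\<in>{1..N}. gg r \<delta> (\<psi> - \<theta> j)))"
    by (simp add: sum_distrib_left[symmetric])
  finally have vx: "v \<bullet> x = r * ((2 / real N) * (\<Sum>j\<in>{1..N}. gg r \<delta> (\<psi> - \<theta> j)))" .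
  have nx: "norm x = r" unfolding x_def using r by (simp add: norm_xpsi)
  have "\<bar>v \<bullet> x\<bar> \<le> norm v * norm x" by (rule Cauchy_Schwarz_ineq2)
  also have "norm v * norm x = r * Err \<delta> x N e" by (simp add: Ev nx)
  finally have "r * \<bar>(2 / real N) * (\<Sum>j\<in>{1..N}. gg r \<delta> (\<psi> - \<theta> j))\<bar> \<le> r * Err \<delta> x N e"
    using r by (simp add: vx abs_mult)
  then show ?thesis unfolding x_def by (rule mult_left_le_imp_le[OF _ r])
qed

lemma gg_integral:
  assumes r: "r > 0" and d: "\<delta> > 0"
  shows "(gg r \<delta> has_integral (\<delta> * (pi*(r/\<delta>) - 4*(\<Sum>k=1..nat \<lfloor>r/\<delta> + 1/2\<rfloor>. ff (r/\<delta>) (real k - 1/2))))) {0..2*pi}"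
proof -
  define R where "R = r/\<delta>"
  have R0: "R > 0" using r d by (simp add: R_def)
  have eq: "gg r \<delta> = (\<lambda>x. \<delta> * ((R * cos x - of_int \<lfloor>R * cos x + 1/2\<rfloor>) * cos x))"
  proof
    fix x
    have h1: "r * cos x / \<delta> = R * cos x" by (simp add: R_def)
    have h2: "r * cos x = \<delta> * (R * cos x)" using d by (simp add: R_def)
    show "gg r \<delta> x = \<delta> * ((R * cos x - of_int \<lfloor>R * cos x + 1/2\<rfloor>) * cos x)"
      unfolding gg_def Qd_def h1 unfolding h2 by (simp add: algebra_simps)
  qed
  show ?thesis unfolding eq R_def[symmetric]
    by (rule has_integral_mult_right[OF I_formula[OF R0]])
qed

lemma gg_meas: "(\<lambda>\<psi>. gg r \<delta> (\<psi> - t)) \<in> borel_measurable borel"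
  unfolding gg_def Qd_def by measurable

lemma gg_per: "gg r \<delta> (x + 2*pi) = gg r \<delta> x"
  by (simp add: gg_def)

lemma xpsi_axis: "xpsi r \<psi> = (r * cos \<psi>) *\<^sub>R axis 1 1 + (r * sin \<psi>) *\<^sub>R axis 2 1"
  unfolding xpsi_def by (simp add: vec_eq_iff forall_2 axis_def)

lemma xpsi_meas: "xpsi r \<in> borel_measurable borel"
proof -
  have "continuous_on UNIV (xpsi r)"
    unfolding xpsi_axis by (intro continuous_intros)
  then show ?thesis by (rule borel_measurable_continuous_onI)
qed

lemma Err2_meas: "(\<lambda>\<psi>. (Err \<delta> (xpsi r \<psi>) N e)^2) \<in> borel_measurable borel"
  unfolding Err_def Qd_def using xpsi_meas[of r] by measurable

lemma sq_mean:
  fixes F :: "real \<Rightarrow> real"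
  assumes F: "(F has_integral I) {0..2*pi}" and F2: "(\<lambda>x. (F x)^2) integrable_on {0..2*pi}"
  shows "integral {0..2*pi} (\<lambda>x. (F x)^2) \<ge> I^2 / (2*pi)"
proof -
  define a where "a = I / (2*pi)"
  define J where "J = integral {0..2*pi} (\<lambda>x. (F x)^2)"
  have J: "((\<lambda>x. (F x)^2) has_integral J) {0..2*pi}" unfolding J_def using F2 by blast
  have c: "((\<lambda>x. a^2) has_integral (2*pi*a^2)) {0..2*pi}"
    using has_integral_const_real[of "a^2" 0 "2*pi"] by simp
  have "((\<lambda>x. (F x)^2 - 2*a*F x + a^2) has_integral (J - 2*a*I + 2*pi*a^2)) {0..2*pi}"
    by (intro has_integral_add has_integral_diff J c has_integral_mult_right F)
  moreover have "(F x)^2 - 2*a*F x + a^2 = (F x - a)^2" for x by (simp add: power2_eq_square algebra_simps)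
  ultimately have "((\<lambda>x. (F x - a)^2) has_integral (J - 2*a*I + 2*pi*a^2)) {0..2*pi}" by simp
  then have "0 \<le> J - 2*a*I + 2*pi*a^2" by (rule has_integral_nonneg) auto
  moreover have "2*a*I - 2*pi*a^2 = I^2/(2*pi)" by (simp add: a_def power2_eq_square field_simps)
  ultimately show ?thesis unfolding J_def[symmetric] by linarith
qed

lemma powr32: "\<delta> > 0 \<Longrightarrow> \<delta> powr (3/2) = sqrt (\<delta>^3)"
proof -
  assume d: "\<delta> > 0"
  have a: "\<delta>^3 = \<delta> powr 3" using d powr_realpow[of \<delta> 3] by simp
  have "\<delta> powr (3/2) = (\<delta> powr 3) powr (1/2)" by (simp add: powr_powr)
  also have "\<dots> = sqrt (\<delta> powr 3)" by (simp add: powr_half_sqrt)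
  also have "\<dots> = sqrt (\<delta>^3)" by (simp add: a)
  finally show ?thesis .
qed

lemma main_bound:
  assumes r: "r > 0" and d: "\<delta> > 0" and R: "r/\<delta> \<ge> 100"
    and e0: "0 \<le> r/\<delta> + 1/2 - real_of_int \<lfloor>r/\<delta> + 1/2\<rfloor>"
    and e1: "r/\<delta> + 1/2 - real_of_int \<lfloor>r/\<delta> + 1/2\<rfloor> \<le> 1/200"
    and fr: "unit_norm_tight_frame N e"
  shows "MSE \<delta> r N e \<ge> 1/4 * \<delta> powr (3/2) / sqrt r"
proof -
  define R where "R = r/\<delta>"
  define n where "n = nat \<lfloor>R + 1/2\<rfloor>"
  define eps where "eps = R + 1/2 - real_of_int \<lfloor>R + 1/2\<rfloor>"
  have R100: "R \<ge> 100" using R by (simp add: R_def)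
  have nr: "real n = R + 1/2 - eps" using R100 by (simp add: n_def eps_def)
  have Sb: "(\<Sum>k=1..n. ff R (real k - 1/2)) \<le> pi*R/4 - 1/(10 * sqrt R)"
    by (rule E_main[OF R100 nr]) (use e0 e1 in \<open>simp_all add: eps_def R_def\<close>)
  define G where "G = \<delta> * (pi*R - 4*(\<Sum>k=1..n. ff R (real k - 1/2)))"
  have qR: "sqrt R > 0" using R100 by simp
  have "pi*R - 4*(\<Sum>k=1..n. ff R (real k - 1/2)) \<ge> 2/5 * (1/sqrt R)"
    using Sb by (simp add: field_simps)
  then have Glb: "G \<ge> \<delta> * (2/5 * (1/sqrt R))" unfolding G_def using d by (intro mult_left_mono) auto
  have G0: "G > 0" using Glb d qR by (smt (verit) divide_pos_pos mult_pos_pos)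
  have Gint: "(gg r \<delta> has_integral G) {0..2*pi}"
    using gg_integral[OF r d] by (simp add: G_def R_def n_def)
  obtain \<theta> where th: "\<forall>j\<in>{1..N}. 0 \<le> \<theta> j \<and> \<theta> j \<le> 2*pi \<and> e j $ 1 = cos (\<theta> j) \<and> e j $ 2 = sin (\<theta> j)"
    using frame_angles[OF fr] by blast
  have N1: "N \<ge> 1" using fr by (simp add: unit_norm_tight_frame_def)
  define F where "F \<psi> = (2 / real N) * (\<Sum>j\<in>{1..N}. gg r \<delta> (\<psi> - \<theta> j))" for \<psi>
  have "(F has_integral ((2 / real N) * (\<Sum>j\<in>{1..N}. G))) {0..2*pi}"
    unfolding F_def
  proof (intro has_integral_mult_right has_integral_sum)
    fix j assume "j \<in> {1..N}"
    then show "((\<lambda>\<psi>. gg r \<delta> (\<psi> - \<theta> j)) has_integral G) {0..2*pi}"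
      using th by (intro shift_int[OF gg_per Gint]) auto
  qed simp
  then have Fint: "(F has_integral (2*G)) {0..2*pi}" using N1 by simp
  have Fle: "\<bar>F \<psi>\<bar> \<le> Err \<delta> (xpsi r \<psi>) N e" for \<psi>
    unfolding F_def using Err_lower[OF fr r] th by auto
  have Ele: "Err \<delta> (xpsi r \<psi>) N e \<le> \<delta>" for \<psi> by (rule Err_le[OF fr d])
  have sqle: "(F \<psi>)^2 \<le> (Err \<delta> (xpsi r \<psi>) N e)^2" for \<psi>
    using power_mono[OF Fle[of \<psi>], of 2] by simp
  have Eb: "(Err \<delta> (xpsi r \<psi>) N e)^2 \<le> \<delta>^2" for \<psi>
    using power_mono[OF Ele[of \<psi>], of 2] abs_ge_zero Fle[of \<psi>] by (meson order_trans)
  have Fmeas: "(\<lambda>\<psi>. (F \<psi>)^2) \<in> borel_measurable borel"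
    unfolding F_def gg_def Qd_def by measurable
  have F2i: "(\<lambda>\<psi>. (F \<psi>)^2) integrable_on {0..2*pi}"
    by (rule int_bdd[OF Fmeas, of "\<delta>^2"]) (use sqle Eb in \<open>auto intro: order_trans\<close>)
  have E2i: "(\<lambda>\<psi>. (Err \<delta> (xpsi r \<psi>) N e)^2) integrable_on {0..2*pi}"
    by (rule int_bdd[OF Err2_meas, where B="\<delta>^2"]) (use Eb in auto)
  have I1: "integral {0..2*pi} (\<lambda>\<psi>. (F \<psi>)^2) \<le> integral {0..2*pi} (\<lambda>\<psi>. (Err \<delta> (xpsi r \<psi>) N e)^2)"
    by (rule integral_le[OF F2i E2i]) (use sqle in auto)
  have I2: "integral {0..2*pi} (\<lambda>\<psi>. (F \<psi>)^2) \<ge> (2*G)^2 / (2*pi)"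
    by (rule sq_mean[OF Fint F2i])
  have "(2*G)^2 / (2*pi) = 2 * G^2 / pi" by (simp add: power2_eq_square)
  also have "\<dots> \<ge> 2 * G^2 / 4" using pi_less_4 G0 by (intro divide_left_mono) auto
  finally have I3: "(2*G)^2 / (2*pi) \<ge> G^2 / 2" by simp
  have "G^2 \<ge> (\<delta> * (2/5 * (1/sqrt R)))^2"
    using Glb d qR by (intro power_mono) auto
  also have "(\<delta> * (2/5 * (1/sqrt R)))^2 = 4/25 * \<delta>^3 / r"
    using d r qR by (simp add: power2_eq_square R_def field_simps power3_eq_cube real_sqrt_divide)
  finally have I4: "G^2 \<ge> 4/25 * \<delta>^3 / r" .
  have I5: "integral {0..2*pi} (\<lambda>\<psi>. (Err \<delta> (xpsi r \<psi>) N e)^2) \<ge> \<delta>^3 / (16 * r)"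
  proof -
    define X where "X = 4/25 * \<delta>^3 / r"
    have "\<delta>^3 / (16 * r) \<le> X / 2" using d r by (simp add: X_def field_simps)
    moreover have "X \<le> G^2" using I4 by (simp add: X_def)
    ultimately show ?thesis using I1 I2 I3 by linarith
  qed
  have "1/4 * \<delta> powr (3/2) / sqrt r = sqrt (\<delta>^3 / (16 * r))"
    using d r by (simp add: powr32 real_sqrt_divide real_sqrt_mult)
  also have "\<dots> \<le> MSE \<delta> r N e" unfolding MSE_def by (rule real_sqrt_le_mono[OF I5])
  finally show ?thesis .
qed

theorem theorem1p2:
  shows "\<exists>\<epsilon>0 > 0. \<exists>C > 0. \<exists>R0. \<forall>r \<delta> :: real. r > 0 \<longrightarrow> \<delta> > 0 \<longrightarrow>
     (let R = r / \<delta>; \<epsilon> = R + 1/2 - real_of_int \<lfloor>R + 1/2\<rfloor> in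
      0 \<le> \<epsilon> \<and> \<epsilon> \<le> \<epsilon>0 \<and> R \<ge> R0 \<longrightarrow>
      (\<forall>N e. unit_norm_tight_frame N e \<longrightarrow>
         MSE \<delta> r N e \<ge> C * \<delta> powr (3/2) / sqrt r))"
  apply (rule exI[where x="1/200"], rule conjI, simp)
  apply (rule exI[where x="1/4"], rule conjI, simp)
  apply (rule exI[where x=100])
  using main_bound by (auto simp: Let_def)

end
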